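(* Let $n\ge5$ be odd and let $\mathcal{S}_n$ be the regular $n$-gon state space. Then the maximum of $\bar P(\mathsf{M}^{(1)},\mathsf{M}^{(2)})$ over all pairs of compatible dichotomic measurements $\mathsf{M}^{(1)},\mathsf{M}^{(2)}$ on $\mathcal{S}_n$ equals $$\frac12\Big(1+\frac{1+\sec(\pi/n)}{4}\Big),$$ which is strictly larger than $\frac34$. In particular, there exist compatible dichotomic measurements on $\mathcal{S}_n$ with $\bar P(\mathsf{M}^{(1)},\mathsf{M}^{(2)})>\frac34$.
   Context: The regular $n$-gon state space $\mathcal{S}_n\subset\mathbb{R}^3$ is the convex hull of $s_j=(r_n\cos(2j\pi/n),\,r_n\sin(2j\pi/n),\,1)^T$, $j=1,\ldots,n$, with $r_n=\sqrt{\sec(\pi/n)}$. Effects are linear functionals $e$ on $\mathbb{R}^3$ with $0\le e\le1$ on $\mathcal{S}_n$; unit effect $u=(0,0,1)$; $\|f\|=\max_{s\in\mathcal{S}_n}|f(s)|$. A dichotomic measurement is a pair of effects $\mathsf{M}_+,\mathsf{M}_-$ with $\mathsf{M}_++\mathsf{M}_-=u$. Two dichotomic measurements are compatible if there exist effects $\mathsf{J}_{x,y}$, $x,y\in\{+,-\}$, with $\sum_y\mathsf{J}_{x,y}=\mathsf{M}^{(1)}_x$ and $\sum_x\mathsf{J}_{x,y}=\mathsf{M}^{(2)}_y$. $\bar P(\mathsf{M}^{(1)},\mathsf{M}^{(2)})=\frac18\sum_{x,y\in\{+,-\}}\|\mathsf{M}^{(1)}_x+\mathsf{M}^{(2)}_y\|$.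 *)

theory Defs
  imports "HOL-Analysis.Analysis"
begin

text \<open>Regular n-gon state space in R^3. Linear functionals on R^3 are represented
  by vectors f, acting as f(s) = f \<bullet> s.\<close>

definition ngon_r :: "nat \<Rightarrow> real" where
  "ngon_r n = sqrt (1 / cos (pi / real n))"

definition ngon_vertex :: "nat \<Rightarrow> nat \<Rightarrow> real^3" where
  "ngon_vertex n j = vector [ngon_r n * cos (2 * real j * pi / real n),
                             ngon_r n * sin (2 * real j * pi / real n), 1]"

definition ngon_states :: "nat \<Rightarrow> (real^3) set" where
  "ngon_states n = convex hull (ngon_vertex n ` {1..n})"

definition unit_effect :: "real^3" where
  "unit_effect = vector [0, 0, 1]"

definition is_effect :: "nat \<Rightarrow> real^3 \<Rightarrow> bool" where
  "is_effect n e \<longleftrightarrow> (\<forall>s\<in>ngon_states n. 0 \<le> e \<bullet> s \<and> e \<bullet> s \<le> 1)"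

definition fnorm :: "nat \<Rightarrow> real^3 \<Rightarrow> real" where
  "fnorm n f = Sup ((\<lambda>s. \<bar>f \<bullet> s\<bar>) ` ngon_states n)"

text \<open>Dichotomic measurement: outcomes indexed by bool (True = +, False = -).\<close>
definition dichotomic :: "nat \<Rightarrow> (bool \<Rightarrow> real^3) \<Rightarrow> bool" where
  "dichotomic n M \<longleftrightarrow> is_effect n (M True) \<and> is_effect n (M False)
                        \<and> M True + M False = unit_effect"

definition compatible :: "nat \<Rightarrow> (bool \<Rightarrow> real^3) \<Rightarrow> (bool \<Rightarrow> real^3) \<Rightarrow> bool" where
  "compatible n M1 M2 \<longleftrightarrow> (\<exists>J :: bool \<Rightarrow> bool \<Rightarrow> real^3.
      (\<forall>x y. is_effect n (J x y)) \<and>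
      (\<forall>x. J x True + J x False = M1 x) \<and>
      (\<forall>y. J True y + J False y = M2 y))"

definition Pbar :: "nat \<Rightarrow> (bool \<Rightarrow> real^3) \<Rightarrow> (bool \<Rightarrow> real^3) \<Rightarrow> real" where
  "Pbar n M1 M2 = (1/8) * (\<Sum>x\<in>UNIV. \<Sum>y\<in>UNIV. fnorm n (M1 x + M2 y))"

end

theory Submission
  imports Defs
begin

lemma inner_vec3: "(g::real^3) \<bullet> vector [x,y,z] = g$1*x + g$2*y + g$3*z"
  by (simp add: inner_vec_def sum_3)

lemma vertex_val:
  "g \<bullet> ngon_vertex n k = ngon_r n * (g$1 * cos (2 * real k * pi / real n) + g$2 * sin (2 * real k * pi / real n)) + g$3"
  unfolding ngon_vertex_def inner_vec3 by (simp add: algebra_simps)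

lemma unit_vertex: "unit_effect \<bullet> ngon_vertex n k = 1"
  unfolding unit_effect_def vertex_val by simp

lemma hull_le:
  assumes "\<forall>v\<in>S. g \<bullet> v \<le> M" "x \<in> convex hull S"
  shows "g \<bullet> x \<le> M"
proof -
  have "convex hull S \<subseteq> {x. g \<bullet> x \<le> M}"
    by (rule hull_minimal) (use assms(1) convex_halfspace_le in auto)
  then show ?thesis using assms(2) by auto
qed

lemma hull_ge:
  assumes "\<forall>v\<in>S. M \<le> g \<bullet> v" "x \<in> convex hull S"
  shows "M \<le> g \<bullet> x"
proof -
  have "(-g) \<bullet> x \<le> -M" by (rule hull_le) (use assms in auto)
  then show ?thesis by simp
qed

lemma states_le:
  assumes "\<forall>k\<in>{1..n}. g \<bullet> ngon_vertex n k \<le> M" "s \<in> ngon_states n"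
  shows "g \<bullet> s \<le> M"
  using assms unfolding ngon_states_def by (intro hull_le[of "ngon_vertex n ` {1..n}"]) auto

lemma states_ge:
  assumes "\<forall>k\<in>{1..n}. M \<le> g \<bullet> ngon_vertex n k" "s \<in> ngon_states n"
  shows "M \<le> g \<bullet> s"
  using assms unfolding ngon_states_def by (intro hull_ge[of "ngon_vertex n ` {1..n}"]) auto

lemma vertex_in_states: "k \<in> {1..n} \<Longrightarrow> ngon_vertex n k \<in> ngon_states n"
  unfolding ngon_states_def by (rule hull_inc) auto

lemma is_effect_vertices:
  assumes "\<forall>k\<in>{1..n}. 0 \<le> e \<bullet> ngon_vertex n k \<and> e \<bullet> ngon_vertex n k \<le> 1"
  shows "is_effect n e"
  unfolding is_effect_def using assms states_le[of n e 1] states_ge[of n 0 e] by auto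

lemma effect_vertex: "is_effect n e \<Longrightarrow> k \<in> {1..n} \<Longrightarrow> 0 \<le> e \<bullet> ngon_vertex n k \<and> e \<bullet> ngon_vertex n k \<le> 1"
  unfolding is_effect_def using vertex_in_states by blast

lemma fnorm_le:
  assumes "n \<ge> 1" "\<forall>k\<in>{1..n}. f \<bullet> ngon_vertex n k \<le> M" "\<forall>s\<in>ngon_states n. 0 \<le> f \<bullet> s"
  shows "fnorm n f \<le> M"
  unfolding fnorm_def
proof (rule cSUP_least)
  show "ngon_states n \<noteq> {}" using vertex_in_states[of n n] assms(1) by auto
  fix s assume "s \<in> ngon_states n"
  then show "\<bar>f \<bullet> s\<bar> \<le> M" using assms(3) states_le[OF assms(2)] by auto
qed

lemma fnorm_ge:
  assumes "k \<in> {1..n}"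
  shows "\<bar>f \<bullet> ngon_vertex n k\<bar> \<le> fnorm n f"
  unfolding fnorm_def
proof (rule cSUP_upper)
  show "ngon_vertex n k \<in> ngon_states n" using vertex_in_states assms .
  let ?B = "\<Sum>k\<in>{1..n}. \<bar>f \<bullet> ngon_vertex n k\<bar>"
  have vb: "\<forall>j\<in>{1..n}. \<bar>f \<bullet> ngon_vertex n j\<bar> \<le> ?B"
    by (intro ballI member_le_sum) auto
  show "bdd_above ((\<lambda>s. \<bar>f \<bullet> s\<bar>) ` ngon_states n)"
  proof (rule bdd_aboveI2)
    fix s assume s: "s \<in> ngon_states n"
    have "f \<bullet> s \<le> ?B" by (rule states_le[OF _ s]) (use vb in fastforce)
    moreover have "(-f) \<bullet> s \<le> ?B" by (rule states_le[OF _ s]) (use vb in fastforce)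
    ultimately show "\<bar>f \<bullet> s\<bar> \<le> ?B" by simp
  qed
qed

lemma cos_le_pin:
  fixes x :: real and n :: nat
  assumes "n \<ge> 1" "pi / n \<le> x" "x \<le> 2*pi - pi/n"
  shows "cos x \<le> cos (pi / n)"
proof (cases "x \<le> pi")
  case True
  then show ?thesis using assms by (intro cos_monotone_0_pi_le) auto
next
  case False
  have "cos x = cos (2*pi - x)" by (simp add: cos_diff)
  also have "\<dots> \<le> cos (pi / n)" using assms False by (intro cos_monotone_0_pi_le) auto
  finally show ?thesis .
qed

lemma cos_odd_le:
  fixes i :: int and n :: nat
  assumes "n \<ge> 1"
  shows "cos ((2 * real_of_int i + 1) * pi / n) \<le> cos (pi / n)"
proof -
  define od where "od = (2*i+1) mod (2 * int n)"
  define q where "q = (2*i+1) div (2 * int n)"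
  have eq: "2*i+1 = 2 * int n * q + od" unfolding od_def q_def by simp
  have o0: "0 \<le> od" "od < 2 * int n" unfolding od_def using assms by auto
  have "odd od" using eq by (metis even_add even_mult_iff odd_one even_numeral)
  then have "od \<noteq> 0" by auto
  then have o1: "1 \<le> od" "od \<le> 2 * int n - 1" using o0 by linarith+
  have "(2 * real_of_int i + 1) * pi / n = 2*pi*real_of_int q + real_of_int od * pi / n"
  proof -
    have "2 * real_of_int i + 1 = 2 * real n * of_int q + of_int od"
      using arg_cong[OF eq, of real_of_int] by simp
    then show ?thesis using assms by (simp add: field_simps)
  qed
  then have "cos ((2 * real_of_int i + 1) * pi / n) = cos (real_of_int od * pi / n)"
    by (simp add: cos_add)
  also have "\<dots> \<le> cos (pi / n)"
  proof (rule cos_le_pin[OF assms])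
    have "1 \<le> real_of_int od" using o1 by simp
    then show "pi / real n \<le> real_of_int od * pi / real n" using assms
      by (simp add: divide_right_mono)
    have "real_of_int od \<le> 2 * real n - 1" using o1 by linarith
    then have "real_of_int od * pi / real n \<le> (2 * real n - 1) * pi / real n"
      by (simp add: divide_right_mono)
    also have "\<dots> = 2*pi - pi / n" using assms by (simp add: field_simps)
    finally show "real_of_int od * pi / real n \<le> 2 * pi - pi / real n" .
  qed
  finally show ?thesis .
qed

lemma near_vertex:
  fixes n :: nat and g1 g2 :: real
  assumes "n \<ge> 1"
  shows "\<exists>k\<in>{1..n}. g1 * cos (2 * real k * pi / real n) + g2 * sin (2 * real k * pi / real n)
            \<le> - sqrt (g1^2 + g2^2) * cos (pi / n)"
proof (cases "g1^2 + g2^2 = 0")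
  case True
  then have "g1 = 0" "g2 = 0" by (auto simp: sum_power2_eq_zero_iff)
  then show ?thesis using assms by (intro bexI[of _ 1]) auto
next
  case False
  define \<rho> where "\<rho> = sqrt (g1^2 + g2^2)"
  have rp: "\<rho> > 0" unfolding \<rho>_def using False by (simp add: sum_power2_ge_zero order_le_neq_trans)
  have r2: "\<rho>^2 = g1^2 + g2^2" unfolding \<rho>_def by simp
  have "(-g1/\<rho>)^2 + (-g2/\<rho>)^2 = (g1^2+g2^2)/\<rho>^2" by (simp add: power_divide add_divide_distrib)
  also have "\<dots> = 1" using r2 False by simp
  finally have "(-g1/\<rho>)^2 + (-g2/\<rho>)^2 = 1" .
  then obtain \<phi> where ph: "0 \<le> \<phi>" "\<phi> < 2*pi" "-g1/\<rho> = cos \<phi>" "-g2/\<rho> = sin \<phi>"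
    by (rule sincos_total_2pi)
  have g1: "g1 = - \<rho> * cos \<phi>" and g2: "g2 = - \<rho> * sin \<phi>" using ph(3,4) rp by (auto simp: field_simps)
  define k0 where "k0 = \<lfloor>real n * \<phi> / (2*pi) + 1/2\<rfloor>"
  have k0a: "real_of_int k0 \<le> real n * \<phi> / (2*pi) + 1/2" and k0b: "real n * \<phi> / (2*pi) + 1/2 < real_of_int k0 + 1"
    unfolding k0_def by linarith+
  have "real n * \<phi> / (2*pi) < real n" using ph(2) assms by (simp add: field_simps)
  then have k0n: "k0 \<le> int n" using k0a by linarith
  have "0 \<le> real n * \<phi> / (2*pi) + 1/2" using ph(1) by simp
  then have k00: "0 \<le> k0" unfolding k0_def by simp
  have "\<bar>2 * real_of_int k0 * pi / real n - \<phi>\<bar> \<le> pi / n"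
  proof -
    have e: "2*pi*(real n * \<phi> / (2*pi) + 1/2) / real n = \<phi> + pi / n" using assms by (simp add: field_simps)
    have "2 * real_of_int k0 * pi / real n \<le> 2*pi*(real n * \<phi> / (2*pi) + 1/2) / real n"
      using k0a by (intro divide_right_mono) auto
    moreover have "2*pi*(real n * \<phi> / (2*pi) + 1/2) / real n < 2*pi*(real_of_int k0 + 1) / real n"
      using k0b assms by (intro divide_strict_right_mono) auto
    moreover have "2*pi*(real_of_int k0 + 1) / real n = 2 * real_of_int k0 * pi / real n + 2 * pi / n"
      using assms by (simp add: field_simps)
    ultimately show ?thesis using e by (simp add: abs_le_iff)
  qed
  then have cle: "cos (pi / n) \<le> cos (2 * real_of_int k0 * pi / real n - \<phi>)"
    using assms by (subst cos_abs_real[symmetric]) (intro cos_monotone_0_pi_le, auto simp: field_simps)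
  define k where "k = (if k0 = 0 then n else nat k0)"
  have kin: "k \<in> {1..n}" unfolding k_def using k0n k00 assms by auto
  have ck: "cos (2 * real k * pi / real n - \<phi>) = cos (2 * real_of_int k0 * pi / real n - \<phi>)"
  proof (cases "k0 = 0")
    case True
    then show ?thesis unfolding k_def using assms by (simp add: cos_diff)
  next
    case False
    then show ?thesis unfolding k_def using k00 by simp
  qed
  have "g1 * cos (2 * real k * pi / real n) + g2 * sin (2 * real k * pi / real n)
        = - \<rho> * cos (2 * real k * pi / real n - \<phi>)"
    unfolding g1 g2 by (simp add: cos_diff algebra_simps)
  also have "\<dots> \<le> - \<rho> * cos (pi / n)" using cle ck rp by simp
  finally show ?thesis using kin unfolding \<rho>_def by blast
qed

lemma cs_bound: "g1 * cos t + g2 * sin t \<le> sqrt (g1^2 + g2^2)"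
proof -
  have "(g1 * cos t + g2 * sin t)^2 + (g1 * sin t - g2 * cos t)^2 = g1^2 * ((sin t)^2 + (cos t)^2) + g2^2 * ((sin t)^2 + (cos t)^2)"
    by algebra
  also have "\<dots> = g1^2 + g2^2" by simp
  finally have "(g1 * cos t + g2 * sin t)^2 \<le> g1^2 + g2^2" by (metis le_add_same_cancel1 zero_le_power2)
  then have "sqrt ((g1 * cos t + g2 * sin t)^2) \<le> sqrt (g1^2 + g2^2)" by (rule real_sqrt_le_mono)
  then show ?thesis by simp
qed

lemma cpos: "n \<ge> 3 \<Longrightarrow> 0 < cos (pi / real n)"
proof -
  assume n: "n \<ge> 3"
  have "pi / real n \<le> pi / 3" using n by (intro divide_left_mono) auto
  moreover have "pi / 3 < pi / 2" by (simp add: divide_strict_left_mono)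
  ultimately have "pi / real n < pi / 2" by linarith
  moreover have "0 < pi / real n" using n by simp
  ultimately show ?thesis by (intro cos_gt_zero_pi) auto
qed

lemma rpos: "n \<ge> 3 \<Longrightarrow> 0 < ngon_r n"
  unfolding ngon_r_def using cpos by simp

lemma keyL:
  fixes g :: "real^3"
  assumes n: "n \<ge> 3" and nn: "\<forall>k\<in>{1..n}. 0 \<le> g \<bullet> ngon_vertex n k"
    and i: "i \<in> {1..n}" and j: "j \<in> {1..n}"
  shows "0 \<le> g$3 + (cos (pi/n) / (1 + cos (pi/n))) * (g \<bullet> (ngon_vertex n i - ngon_vertex n j))"
proof -
  define c where "c = cos (pi/n)"
  define r where "r = ngon_r n"
  define t where "t = c / (1 + c)"
  define P where "P k = g$1 * cos (2 * real k * pi / real n) + g$2 * sin (2 * real k * pi / real n)" for k :: nat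
  define \<rho> where "\<rho> = sqrt ((g$1)^2 + (g$2)^2)"
  have c0: "0 < c" unfolding c_def using cpos n by simp
  have r0: "0 < r" unfolding r_def using rpos n by simp
  have t0: "0 \<le> t" unfolding t_def using c0 by simp
  have vv: "g \<bullet> ngon_vertex n k = r * P k + g$3" for k unfolding vertex_val P_def r_def by simp
  obtain k where k: "k \<in> {1..n}" "P k \<le> - \<rho> * c"
    using near_vertex[of n "g$1" "g$2"] n unfolding P_def \<rho>_def c_def by auto
  have "0 \<le> r * P k + g$3" using nn k vv by metis
  moreover have "r * (\<rho> * c) \<le> - (r * P k)" using mult_left_mono[OF k(2), of r] r0 by simp
  ultimately have "r * \<rho> * c \<le> g$3" by (simp add: mult.assoc)
  then have hr: "r * \<rho> \<le> g$3 / c" using c0 by (simp add: field_simps)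
  have "0 \<le> r * P i + g$3" using nn i vv by metis
  then have hi: "- g$3 \<le> r * P i" by linarith
  have "P j \<le> \<rho>" unfolding P_def \<rho>_def by (rule cs_bound)
  then have hj: "r * P j \<le> g$3 / c" using hr r0 by (smt (verit) mult_left_mono)
  have h1: "-(g$3 * (1+c)/c) \<le> r * P i - r * P j"
  proof -
    have "-(g$3 * (1+c)/c) = - g$3 - g$3 / c" using c0 by (simp add: field_simps)
    then show ?thesis using hi hj by linarith
  qed
  have A1: "t * (-(g$3 * (1+c)/c)) \<le> t * (r * P i - r * P j)" using h1 t0 by (rule mult_left_mono)
  have A2: "t * (-(g$3 * (1+c)/c)) = - g$3"
  proof -
    have "c \<noteq> 0" "1 + c \<noteq> 0" "c + c * c \<noteq> 0" using c0 by (auto, smt (verit) mult_pos_pos)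
    then show ?thesis unfolding t_def by (simp add: field_simps)
  qed
  have A3: "g \<bullet> (ngon_vertex n i - ngon_vertex n j) = r * P i - r * P j"
    by (simp add: inner_diff_right vv)
  have "0 \<le> g$3 + t * (r * P i - r * P j)" using A1 A2 by linarith
  then show ?thesis unfolding A3 t_def c_def .
qed

lemma pair_bound:
  assumes n: "n \<ge> 3" and A: "is_effect n A" and B: "is_effect n B"
    and F: "\<forall>s\<in>ngon_states n. 0 \<le> (unit_effect + A - B) \<bullet> s"
    and G: "\<forall>s\<in>ngon_states n. 0 \<le> (unit_effect - A + B) \<bullet> s"
  shows "fnorm n (unit_effect + A - B) + fnorm n (unit_effect - A + B)
           \<le> 2 + (A + B)$3 * (1 + cos (pi/n)) / cos (pi/n)"
proof -
  define c where "c = cos (pi/n)"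
  define t where "t = c / (1 + c)"
  define K where "K = (A + B)$3 * (1 + c) / c"
  define v where "v = ngon_vertex n"
  define a where "a = A - B"
  have c0: "0 < c" unfolding c_def using cpos n by simp
  have t0: "0 < t" unfolding t_def using c0 by simp
  have nnA: "\<forall>k\<in>{1..n}. 0 \<le> A \<bullet> ngon_vertex n k" using effect_vertex[OF A] by blast
  have nnB: "\<forall>k\<in>{1..n}. 0 \<le> B \<bullet> ngon_vertex n k" using effect_vertex[OF B] by blast
  have diff: "a \<bullet> v i - a \<bullet> v j \<le> K" if i: "i \<in> {1..n}" and j: "j \<in> {1..n}" for i j
  proof -
    have 1: "0 \<le> B$3 + t * (B \<bullet> (v i - v j))" using keyL[OF n nnB i j] unfolding t_def c_def v_def .
    have 2: "0 \<le> A$3 + t * (A \<bullet> (v j - v i))" using keyL[OF n nnA j i] unfolding t_def c_def v_def .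
    have e1: "A \<bullet> (v j - v i) = - (A \<bullet> v i - A \<bullet> v j)" by (simp add: inner_diff_right)
    have e2: "B \<bullet> (v i - v j) = B \<bullet> v i - B \<bullet> v j" by (simp add: inner_diff_right)
    have e3: "a \<bullet> v i - a \<bullet> v j = (A \<bullet> v i - A \<bullet> v j) - (B \<bullet> v i - B \<bullet> v j)"
      unfolding a_def by (simp add: inner_diff_left)
    have "t * (a \<bullet> v i - a \<bullet> v j) \<le> A$3 + B$3"
      using 1 2 unfolding e1 e2 e3 by (simp add: algebra_simps)
    then have "a \<bullet> v i - a \<bullet> v j \<le> (A$3 + B$3) / t" using t0 by (simp add: pos_le_divide_eq mult.commute)
    also have "\<dots> = K" unfolding K_def t_def using c0 by (simp add: field_simps)
    finally show ?thesis .
  qed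
  define M where "M = Max ((\<lambda>k. a \<bullet> v k) ` {1..n})"
  have fin: "finite ((\<lambda>k. a \<bullet> v k) ` {1..n})" "(\<lambda>k. a \<bullet> v k) ` {1..n} \<noteq> {}" using n by auto
  obtain i where i: "i \<in> {1..n}" "a \<bullet> v i = M" using Max_in[OF fin] unfolding M_def by auto
  have Mge: "a \<bullet> v k \<le> M" if "k \<in> {1..n}" for k unfolding M_def using fin that by (intro Max_ge) auto
  have val1: "(unit_effect + A - B) \<bullet> v k = 1 + a \<bullet> v k" for k
    unfolding a_def v_def by (simp add: inner_diff_left inner_add_left unit_vertex)
  have val2: "(unit_effect - A + B) \<bullet> v k = 1 - a \<bullet> v k" for k
    unfolding a_def v_def by (simp add: inner_diff_left inner_add_left unit_vertex)
  have f1: "fnorm n (unit_effect + A - B) \<le> 1 + M"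
  proof (rule fnorm_le)
    show "\<forall>k\<in>{1..n}. (unit_effect + A - B) \<bullet> ngon_vertex n k \<le> 1 + M"
      using Mge val1 unfolding v_def by auto
  qed (use n F in auto)
  have f2: "fnorm n (unit_effect - A + B) \<le> 1 - M + K"
  proof (rule fnorm_le)
    show "\<forall>k\<in>{1..n}. (unit_effect - A + B) \<bullet> ngon_vertex n k \<le> 1 - M + K"
      using diff i unfolding v_def[symmetric] val2 by (smt (verit))
  qed (use n G in auto)
  show ?thesis using f1 f2 unfolding K_def c_def by linarith
qed

lemma Pbar_expand: "Pbar n M1 M2 = (1/8) * (fnorm n (M1 True + M2 True) + fnorm n (M1 True + M2 False)
   + fnorm n (M1 False + M2 True) + fnorm n (M1 False + M2 False))"
  unfolding Pbar_def by (simp add: UNIV_bool)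

lemma unit3: "unit_effect $ 3 = 1" unfolding unit_effect_def by simp

lemma upper:
  assumes n: "n \<ge> 3" and d1: "dichotomic n M1" and d2: "dichotomic n M2" and cp: "compatible n M1 M2"
  shows "Pbar n M1 M2 \<le> (1/2) * (1 + (1 + 1 / cos (pi / real n)) / 4)"
proof -
  obtain J where J: "\<forall>x y. is_effect n (J x y)" "\<forall>x. J x True + J x False = M1 x"
      "\<forall>y. J True y + J False y = M2 y"
    using cp unfolding compatible_def by blast
  define A where "A = J True True"
  define B where "B = J False False"
  define C where "C = J True False"
  define D where "D = J False True"
  define c where "c = cos (pi/n)"
  have c0: "0 < c" unfolding c_def using cpos n by simp
  have m1t: "M1 True = A + C" and m1f: "M1 False = D + B" and m2t: "M2 True = A + D" and m2f: "M2 False = C + B"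
    using J unfolding A_def B_def C_def D_def by (metis add.commute)+
  have u: "unit_effect = A + B + C + D" using d1 unfolding dichotomic_def m1t m1f by (simp add: algebra_simps)
  have e1: "M1 True + M2 True = unit_effect + A - B" unfolding m1t m2t u by (simp add: algebra_simps)
  have e2: "M1 False + M2 False = unit_effect - A + B" unfolding m1f m2f u by (simp add: algebra_simps)
  have e3: "M1 True + M2 False = unit_effect + C - D" unfolding m1t m2f u by (simp add: algebra_simps)
  have e4: "M1 False + M2 True = unit_effect - C + D" unfolding m1f m2t u by (simp add: algebra_simps)
  have nn: "\<forall>s\<in>ngon_states n. 0 \<le> (M1 x + M2 y) \<bullet> s" for x y
  proof -
    have h1: "is_effect n (M1 x)" using d1 unfolding dichotomic_def by (cases x) auto
    have h2: "is_effect n (M2 y)" using d2 unfolding dichotomic_def by (cases y) auto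
    show ?thesis
    proof
      fix s assume s: "s \<in> ngon_states n"
      have "0 \<le> M1 x \<bullet> s" "0 \<le> M2 y \<bullet> s" using h1 h2 s unfolding is_effect_def by auto
      then show "0 \<le> (M1 x + M2 y) \<bullet> s" by (simp add: inner_add_left)
    qed
  qed
  have eA: "is_effect n A" and eB: "is_effect n B" and eC: "is_effect n C" and eD: "is_effect n D"
    unfolding A_def B_def C_def D_def using J(1) by blast+
  have p1: "fnorm n (unit_effect + A - B) + fnorm n (unit_effect - A + B) \<le> 2 + (A + B)$3 * (1 + c) / c"
    using pair_bound[OF n eA eB nn[of True True, unfolded e1] nn[of False False, unfolded e2]] unfolding c_def .
  have p2: "fnorm n (unit_effect + C - D) + fnorm n (unit_effect - C + D) \<le> 2 + (C + D)$3 * (1 + c) / c"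
    using pair_bound[OF n eC eD nn[of True False, unfolded e3] nn[of False True, unfolded e4]] unfolding c_def .
  have s3: "(A + B)$3 + (C + D)$3 = 1" using arg_cong[OF u, of "\<lambda>x. x$3"] unit3 by simp
  have "(A + B)$3 * (1 + c) / c + (C + D)$3 * (1 + c) / c = ((A + B)$3 + (C + D)$3) * (1 + c) / c"
    by (simp add: add_divide_distrib distrib_right)
  also have "\<dots> = (1 + c) / c" using s3 by simp
  finally have s4: "(A + B)$3 * (1 + c) / c + (C + D)$3 * (1 + c) / c = (1 + c) / c" .
  have "Pbar n M1 M2 \<le> (1/8) * (4 + (1 + c) / c)"
  proof -
    obtain X Y Z where XYZ: "X = (A + B)$3 * (1 + c) / c" "Y = (C + D)$3 * (1 + c) / c" "Z = (1 + c) / c" by blast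
    have "fnorm n (unit_effect + A - B) + fnorm n (unit_effect + C - D) + fnorm n (unit_effect - C + D)
      + fnorm n (unit_effect - A + B) \<le> 4 + Z"
      using p1 p2 s4 unfolding XYZ[symmetric] by linarith
    then show ?thesis unfolding Pbar_expand e1 e2 e3 e4 XYZ by (intro mult_left_mono) auto
  qed
  also have "\<dots> = (1/2) * (1 + (1 + 1 / c) / 4)" using c0 by (simp add: field_simps)
  finally show ?thesis unfolding c_def .
qed

definition Evec :: "nat \<Rightarrow> real \<Rightarrow> real \<Rightarrow> real^3" where
  "Evec n \<phi> w = vector [- w * cos \<phi> / (ngon_r n * (1 + cos (pi/n))),
                         - w * sin \<phi> / (ngon_r n * (1 + cos (pi/n))),
                         w * cos (pi/n) / (1 + cos (pi/n))]"

lemma alg_aux: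
  fixes r c a b X Y w :: real
  assumes "r \<noteq> 0" "1 + c \<noteq> 0"
  shows "r * (- w * a / (r * (1 + c)) * X + - w * b / (r * (1 + c)) * Y) + w * c / (1 + c)
         = w * (c - (X * a + Y * b)) / (1 + c)"
proof -
  have h: "r * (z / (r * (1 + c))) = z / (1 + c)" for z using assms(1) by simp

  have "r * (- w * a / (r * (1 + c)) * X + - w * b / (r * (1 + c)) * Y)
        = (r * (- w * a / (r * (1 + c)))) * X + (r * (- w * b / (r * (1 + c)))) * Y"
    by (simp only: distrib_left mult.assoc)
  also have "\<dots> = (- w * a / (1 + c)) * X + (- w * b / (1 + c)) * Y" by (simp only: h)
  also have "\<dots> = (- w * a * X + - w * b * Y) / (1 + c)" by (simp add: add_divide_distrib diff_divide_distrib)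
  also have "\<dots> = - w * (X * a + Y * b) / (1 + c)"
  proof -
    have "- w * a * X + - w * b * Y = - w * (X * a + Y * b)" by (simp add: algebra_simps)
    then show ?thesis by simp
  qed
  finally have "r * (- w * a / (r * (1 + c)) * X + - w * b / (r * (1 + c)) * Y)
        = - w * (X * a + Y * b) / (1 + c)" .
  then show ?thesis by (simp add: diff_divide_distrib add_divide_distrib algebra_simps)
qed

lemma Evec_val:
  assumes "n \<ge> 3"
  shows "Evec n \<phi> w \<bullet> ngon_vertex n k
     = w * (cos (pi/n) - cos (2 * real k * pi / real n - \<phi>)) / (1 + cos (pi/n))"
proof -
  have r: "ngon_r n \<noteq> 0" using rpos assms by (simp add: less_imp_neq[symmetric])
  have c: "1 + cos (pi/n) \<noteq> 0" using cpos[OF assms] by simp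
  show ?thesis unfolding vertex_val Evec_def vector_3 cos_diff
    by (rule alg_aux[OF r c])
qed

lemma Evec_effect:
  assumes n: "n \<ge> 3" and w: "0 \<le> w" "w \<le> 1"
    and cs: "\<forall>k\<in>{1..n}. cos (2 * real k * pi / real n - \<phi>) \<le> cos (pi/n)"
  shows "is_effect n (Evec n \<phi> w)"
proof (rule is_effect_vertices, intro ballI conjI)
  fix k assume k: "k \<in> {1..n}"
  define c where "c = cos (pi/n)"
  define x where "x = cos (2 * real k * pi / real n - \<phi>)"
  have c0: "0 < c" unfolding c_def using cpos n by simp
  have x1: "x \<le> c" "-1 \<le> x" using cs k unfolding x_def c_def by auto
  have v: "Evec n \<phi> w \<bullet> ngon_vertex n k = w * (c - x) / (1 + c)"
    unfolding Evec_val[OF n] c_def x_def ..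
  show "0 \<le> Evec n \<phi> w \<bullet> ngon_vertex n k" unfolding v using x1 w c0 by simp
  have "w * (c - x) \<le> 1 * (1 + c)" using x1 w c0 by (intro mult_mono) auto
  then show "Evec n \<phi> w \<bullet> ngon_vertex n k \<le> 1" unfolding v using c0 by (simp add: divide_le_eq)
qed

lemma Evec_add: "Evec n \<phi> w1 + Evec n \<phi> w2 = Evec n \<phi> (w1 + w2)"
  unfolding Evec_def by (simp add: vec_eq_iff forall_3 add_divide_distrib[symmetric] algebra_simps)

lemma part_effect:
  assumes "is_effect n X" "is_effect n Y" "is_effect n Z" "is_effect n W"
    and "X + Y + Z + W = unit_effect"
  shows "is_effect n (X + Y)"
  unfolding is_effect_def
proof
  fix s assume s: "s \<in> ngon_states n"
  have u1: "unit_effect \<bullet> s \<le> 1" by (rule states_le[OF _ s]) (simp add: unit_vertex)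
  have "0 \<le> X \<bullet> s" "0 \<le> Y \<bullet> s" "0 \<le> Z \<bullet> s" "0 \<le> W \<bullet> s"
    using assms(1-4) s unfolding is_effect_def by auto
  moreover have "unit_effect \<bullet> s = X \<bullet> s + Y \<bullet> s + Z \<bullet> s + W \<bullet> s"
    unfolding assms(5)[symmetric] by (simp add: inner_add_left)
  ultimately show "0 \<le> (X + Y) \<bullet> s \<and> (X + Y) \<bullet> s \<le> 1" using u1 by (simp add: inner_add_left)
qed

lemma cos_half: "n \<ge> 3 \<Longrightarrow> 1/2 \<le> cos (pi / real n)"
proof -
  assume n: "n \<ge> 3"
  have "pi / real n \<le> pi / 3" using n by (intro divide_left_mono) auto
  then have "cos (pi / 3) \<le> cos (pi / real n)" using n by (intro cos_monotone_0_pi_le) auto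
  then show ?thesis by (simp add: cos_60)
qed

lemma cos_lt1: "n \<ge> 3 \<Longrightarrow> cos (pi / real n) < 1"
proof -
  assume n: "n \<ge> 3"
  have "pi / real n \<le> pi" using n by (simp add: divide_le_eq)
  moreover have "0 < pi / real n" using n by simp
  ultimately have "cos (pi / real n) < cos 0" by (subst cos_mono_less_eq) auto
  then show ?thesis by simp
qed

lemma cs_conds:
  assumes nm: "n = 2*m+1" and n: "n \<ge> 3"
  shows "\<forall>k\<in>{1..n}. cos (2 * real k * pi / real n - pi) \<le> cos (pi/n)"
    and "\<forall>k\<in>{1..n}. cos (2 * real k * pi / real n - pi/n) \<le> cos (pi/n)"
    and "\<forall>k\<in>{1..n}. cos (2 * real k * pi / real n - - (pi/n)) \<le> cos (pi/n)"
proof -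
  have n1: "n \<ge> 1" using n by simp
  have rn: "real n = 2 * real m + 1" using nm by simp
  show "\<forall>k\<in>{1..n}. cos (2 * real k * pi / real n - pi) \<le> cos (pi/n)"
  proof
    fix k assume "k \<in> {1..n}"
    have "2 * real_of_int (int k - int m - 1) + 1 = 2 * real k - real n" using rn by simp
    then have "(2 * real_of_int (int k - int m - 1) + 1) * pi / n = (2 * real k - real n) * pi / n" by simp
    also have "\<dots> = 2 * real k * pi / real n - pi" using n by (simp add: field_simps)
    finally have "(2 * real_of_int (int k - int m - 1) + 1) * pi / n = 2 * real k * pi / real n - pi" .
    then show "cos (2 * real k * pi / real n - pi) \<le> cos (pi/n)"
      using cos_odd_le[OF n1, of "int k - int m - 1"] by simp
  qed
  show "\<forall>k\<in>{1..n}. cos (2 * real k * pi / real n - pi/n) \<le> cos (pi/n)"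
  proof
    fix k assume "k \<in> {1..n}"
    have "(2 * real_of_int (int k - 1) + 1) * pi / n = 2 * real k * pi / real n - pi/n"
      using n by (simp add: field_simps)
    then show "cos (2 * real k * pi / real n - pi/n) \<le> cos (pi/n)"
      using cos_odd_le[OF n1, of "int k - 1"] by simp
  qed
  show "\<forall>k\<in>{1..n}. cos (2 * real k * pi / real n - - (pi/n)) \<le> cos (pi/n)"
  proof
    fix k assume "k \<in> {1..n}"
    have "(2 * real_of_int (int k) + 1) * pi / n = 2 * real k * pi / real n - - (pi/n)"
      using n by (simp add: field_simps)
    then show "cos (2 * real k * pi / real n - - (pi/n)) \<le> cos (pi/n)"
      using cos_odd_le[OF n1, of "int k"] by simp
  qed
qed

lemma hq: "0 < (x::real) \<Longrightarrow> (x + 1) / (2 * x * (1 + x)) = 1 / (2 * x)"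
proof -
  assume x: "0 < x"
  have p: "0 < x * 2" "0 < x * (x * 2)" using x by simp_all
  have "x * 2 + x * (x * 2) \<noteq> 0" using p by linarith
  moreover have "1 + x \<noteq> 0" "x \<noteq> 0" using x by auto
  ultimately show ?thesis by (simp add: field_simps add.commute)
qed

theorem mainTheorem13:
  fixes n :: nat
  assumes "odd n" and "n \<ge> 5"
  defines "v \<equiv> (1/2) * (1 + (1 + 1 / cos (pi / real n)) / 4)"
  shows "(\<exists>M1 M2. dichotomic n M1 \<and> dichotomic n M2 \<and> compatible n M1 M2 \<and> Pbar n M1 M2 = v)
       \<and> (\<forall>M1 M2. dichotomic n M1 \<and> dichotomic n M2 \<and> compatible n M1 M2 \<longrightarrow> Pbar n M1 M2 \<le> v)
       \<and> v > 3/4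
       \<and> (\<exists>M1 M2. dichotomic n M1 \<and> dichotomic n M2 \<and> compatible n M1 M2 \<and> Pbar n M1 M2 > 3/4)"
proof -
  have n3: "n \<ge> 3" using assms(2) by simp
  obtain m where nm: "n = 2*m+1" using assms(1) oddE by blast
  have rn: "real n = 2 * real m + 1" using nm by simp
  define c where "c = cos (pi / real n)"
  have c0: "0 < c" unfolding c_def using cpos[OF n3] .
  have c1: "c < 1" unfolding c_def using cos_lt1[OF n3] .
  have ch: "1/2 \<le> c" unfolding c_def using cos_half[OF n3] .
  define w where "w = 1 / (2 * c)"
  have w0: "0 \<le> w" and w1: "w \<le> 1" unfolding w_def using c0 ch by (auto simp: field_simps)
  have wc: "w * c = 1/2" unfolding w_def using c0 by simp
  define A where "A = Evec n pi (1/2)"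
  define Dv where "Dv = Evec n (pi/n) w"
  define B where "B = Evec n (- (pi/n)) w"
  have eA: "is_effect n A" unfolding A_def using cs_conds[OF nm n3] n3 by (intro Evec_effect) auto
  have eD: "is_effect n Dv" unfolding Dv_def using cs_conds[OF nm n3] n3 w0 w1 by (intro Evec_effect) auto
  have eB: "is_effect n B" unfolding B_def using cs_conds[OF nm n3] n3 w0 w1 by (intro Evec_effect) auto
  have usum: "A + B + A + Dv = unit_effect"
  proof -
    have r: "ngon_r n \<noteq> 0" using rpos[OF n3] by simp
    have c': "1 + c \<noteq> 0" using c0 by simp
    have e1: "- (1/2) * cos pi / (ngon_r n * (1 + c)) + - w * cos (- (pi/n)) / (ngon_r n * (1 + c))
        + - (1/2) * cos pi / (ngon_r n * (1 + c)) + - w * cos (pi/n) / (ngon_r n * (1 + c)) = 0"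
    proof -
      have "- (1/2) * cos pi / (ngon_r n * (1 + c)) + - w * cos (- (pi/n)) / (ngon_r n * (1 + c))
        + - (1/2) * cos pi / (ngon_r n * (1 + c)) + - w * cos (pi/n) / (ngon_r n * (1 + c))
        = (1 - 2 * (w * c)) / (ngon_r n * (1 + c))"
        unfolding c_def by (simp add: add_divide_distrib diff_divide_distrib)
      then show ?thesis using wc by simp
    qed
    have e2: "- (1/2) * sin pi / (ngon_r n * (1 + c)) + - w * sin (- (pi/n)) / (ngon_r n * (1 + c))
        + - (1/2) * sin pi / (ngon_r n * (1 + c)) + - w * sin (pi/n) / (ngon_r n * (1 + c)) = 0"
      by (simp add: add_divide_distrib[symmetric])
    have gen: "\<And>x y d::real. x/d + y/d + x/d + y/d = (x+y+x+y)/d" by (simp add: add_divide_distrib)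
    have e3: "(1/2) * c / (1 + c) + w * c / (1 + c) + (1/2) * c / (1 + c) + w * c / (1 + c) = 1"
    proof -
      have "(1/2) * c / (1 + c) + w * c / (1 + c) + (1/2) * c / (1 + c) + w * c / (1 + c)
         = ((1/2) * c + w * c + (1/2) * c + w * c) / (1 + c)"
        by (rule gen)
      also have "(1/2) * c + w * c + (1/2) * c + w * c = 1 + c" using wc by (simp add: mult.commute)
      finally show ?thesis using c' by simp
    qed
    show ?thesis
      unfolding A_def B_def Dv_def Evec_def unit_effect_def vec_eq_iff forall_3
      using e1 e2 e3 unfolding c_def by simp
  qed
  define J where "J = (\<lambda>x y. if x then A else if y then Dv else B)"
  define M1 where "M1 = (\<lambda>x. J x True + J x False)"
  define M2 where "M2 = (\<lambda>y. J True y + J False y)"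
  have M1T: "M1 True = A + A" and M1F: "M1 False = Dv + B" and M2T: "M2 True = A + Dv" and M2F: "M2 False = A + B"
    unfolding M1_def M2_def J_def by simp_all
  have d1: "dichotomic n M1" unfolding dichotomic_def M1T M1F
  proof (intro conjI)
    show "is_effect n (A + A)" using part_effect[OF eA eA eB eD] usum by (simp add: algebra_simps)
    show "is_effect n (Dv + B)" using part_effect[OF eD eB eA eA] usum by (simp add: algebra_simps)
    show "A + A + (Dv + B) = unit_effect" using usum by (simp add: algebra_simps)
  qed
  have d2: "dichotomic n M2" unfolding dichotomic_def M2T M2F
  proof (intro conjI)
    show "is_effect n (A + Dv)" using part_effect[OF eA eD eA eB] usum by (simp add: algebra_simps)
    show "is_effect n (A + B)" using part_effect[OF eA eB eA eD] usum by (simp add: algebra_simps)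
    show "A + Dv + (A + B) = unit_effect" using usum by (simp add: algebra_simps)
  qed
  have cp: "compatible n M1 M2" unfolding compatible_def
  proof (intro exI[of _ J] conjI allI)
    fix x y show "is_effect n (J x y)" unfolding J_def using eA eB eD by simp
  qed (simp_all add: M1_def M2_def)
  have up: "\<forall>M1 M2. dichotomic n M1 \<and> dichotomic n M2 \<and> compatible n M1 M2 \<longrightarrow> Pbar n M1 M2 \<le> v"
    using upper[OF n3] unfolding v_def by blast
  have u': "unit_effect = A + B + A + Dv" using usum by simp
  have f1: "M1 True + M2 True = unit_effect + A - B" unfolding M1T M2T u' by (simp add: algebra_simps)
  have f2: "M1 False + M2 False = unit_effect - A + B" unfolding M1F M2F u' by (simp add: algebra_simps)
  have f3: "M1 True + M2 False = unit_effect + A - Dv" unfolding M1T M2F u' by (simp add: algebra_simps)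
  have f4: "M1 False + M2 True = unit_effect - A + Dv" unfolding M1F M2T u' by (simp add: algebra_simps)
  have a1: "2 * real n * pi / real n = 2 * pi" using n3 by simp
  have a2: "2 * real m * pi / real n = pi - pi / n" using n3 rn by (simp add: field_simps)
  define m1 where "m1 = m + 1"
  have a3: "2 * real m1 * pi / real n = pi + pi / n" using n3 rn unfolding m1_def by (simp add: field_simps)
  have vA_n: "A \<bullet> ngon_vertex n n = 1/2" unfolding A_def Evec_val[OF n3] a1 using cpos[OF n3] by (simp add: cos_diff)
  have vB_n: "B \<bullet> ngon_vertex n n = 0" unfolding B_def Evec_val[OF n3] a1 by (simp add: cos_diff cos_add)
  have vD_n: "Dv \<bullet> ngon_vertex n n = 0" unfolding Dv_def Evec_val[OF n3] a1 by (simp add: cos_diff)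
  have vA_m: "A \<bullet> ngon_vertex n m = 0" unfolding A_def Evec_val[OF n3] a2 by (simp add: cos_diff)
  have vB_m: "B \<bullet> ngon_vertex n m = w" unfolding B_def Evec_val[OF n3] a2 using hq[OF cpos[OF n3]] unfolding w_def c_def by (simp add: cos_diff)
  have vA_m1: "A \<bullet> ngon_vertex n m1 = 0" unfolding A_def Evec_val[OF n3] a3 by (simp add: cos_diff)
  have vD_m1: "Dv \<bullet> ngon_vertex n m1 = w" unfolding Dv_def Evec_val[OF n3] a3 using hq[OF cpos[OF n3]] unfolding w_def c_def by (simp add: cos_diff)
  have mi: "m \<in> {1..n}" "m1 \<in> {1..n}" "n \<in> {1..n}" unfolding m1_def using nm assms(2) by auto
  have g1: "3/2 \<le> fnorm n (M1 True + M2 True)"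
    using fnorm_ge[OF mi(3), of "M1 True + M2 True"] unfolding f1
    by (simp add: inner_add_left inner_diff_left unit_vertex vA_n vB_n)
  have g3: "3/2 \<le> fnorm n (M1 True + M2 False)"
    using fnorm_ge[OF mi(3), of "M1 True + M2 False"] unfolding f3
    by (simp add: inner_add_left inner_diff_left unit_vertex vA_n vD_n)
  have g2: "1 + w \<le> fnorm n (M1 False + M2 False)"
    using fnorm_ge[OF mi(1), of "M1 False + M2 False"] unfolding f2 using w0
    by (simp add: inner_add_left inner_diff_left unit_vertex vA_m vB_m)
  have g4: "1 + w \<le> fnorm n (M1 False + M2 True)"
    using fnorm_ge[OF mi(2), of "M1 False + M2 True"] unfolding f4 using w0
    by (simp add: inner_add_left inner_diff_left unit_vertex vA_m1 vD_m1)
  have "v \<le> Pbar n M1 M2"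
  proof -
    have "v = (1/8) * (5 + 2 * w)" unfolding v_def w_def c_def[symmetric] using c0 by (simp add: field_simps)
    also have "\<dots> \<le> Pbar n M1 M2" unfolding Pbar_expand
    proof (rule mult_left_mono)
      show "5 + 2 * w \<le> fnorm n (M1 True + M2 True) + fnorm n (M1 True + M2 False) +
        fnorm n (M1 False + M2 True) + fnorm n (M1 False + M2 False)" using g1 g2 g3 g4 by linarith
    qed simp
    finally show ?thesis .
  qed
  then have eqv: "Pbar n M1 M2 = v" using up d1 d2 cp by (meson order_antisym)
  have v34: "v > 3/4"
  proof -
    have "1 < 1 / c" using c0 c1 by simp
    then show ?thesis unfolding v_def c_def[symmetric] by simp
  qed
  show ?thesis using d1 d2 cp eqv up v34 by auto
qed

end
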